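(* Let $G=(V,E,w)$ be a connected edge-weighted graph with positive rational weights, at least two vertices, and maximum degree $\Delta$. The greedy algorithm applied to $U=V$ and the function $f=h+c$ returns a WPPICDS $S$ with $$|S|\le\Big(2+\ln\big(\tfrac32\cdot L\cdot W+\Delta\big)\Big)\cdot|S^*|,$$ where $S^*$ is a minimum-cardinality WPPICDS.
   Context: $N_A(v)=N(v)\cap A$, $W_A(v)=\sum_{u\in N_A(v)}w_{(v,u)}$, $W(v)=W_V(v)$, $W=\max_v W(v)$. $h(A)=\sum_{v\in V}h_A(v)$ with $h_A(v)=W(v)/2$ if $v\in A$ or $W_A(v)\ge W(v)/2$, and $h_A(v)=W_A(v)$ otherwise. For $v$ with incident edge weights $w_1,\dots,w_d$, write $w_0=W(v)/2$ and each $w_i$ as a reduced fraction $p_i/q_i$; $l(v)=\mathrm{lcm}\{q_0,\dots,q_d\}$, $L=\max_v l(v)$. $p(A)$ is the number of connected components of $G[A]$ ($p(\emptyset)=0$), $q(A)$ the number of connected components of the spanning subgraph $(V,\{e\in E: e\text{ has at least one endpoint in }A\})$, $c(A)=\frac1L(|V|-q(A)-p(A))$. The greedy algorithm: start with $S=\emptyset$; while some $u\in V\setminus S$ has $f(S\cup\{u\})-f(S)>0$, add to $S$ an element maximizing this increment (ties arbitrary); return $S$. A WPPICDS is a set $S\subseteq V$ such that every $v\in V\setminus S$ satisfies $W_S(v)\ge W(v)/2$ and $G[S]$ is connected. *)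

theory Defs
  imports Complex_Main
begin

definition nbrs :: "'a set \<Rightarrow> ('a \<Rightarrow> 'a \<Rightarrow> bool) \<Rightarrow> 'a \<Rightarrow> 'a set" where
  "nbrs V E v = {u \<in> V. E v u}"

definition num_comps :: "'a set \<Rightarrow> ('a \<Rightarrow> 'a \<Rightarrow> bool) \<Rightarrow> nat" where
  "num_comps X R = card {{y \<in> X. (x, y) \<in> {(a, b). a \<in> X \<and> b \<in> X \<and> R a b}\<^sup>*} | x. x \<in> X}"

definition simple_graph :: "'a set \<Rightarrow> ('a \<Rightarrow> 'a \<Rightarrow> bool) \<Rightarrow> bool" where
  "simple_graph V E \<longleftrightarrow> finite V \<and> (\<forall>u v. E u v \<longrightarrow> u \<in> V \<and> v \<in> V)
     \<and> (\<forall>u v. E u v \<longrightarrow> E v u) \<and> (\<forall>v. \<not> E v v)"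

definition max_degree :: "'a set \<Rightarrow> ('a \<Rightarrow> 'a \<Rightarrow> bool) \<Rightarrow> nat" where
  "max_degree V E = Max ((\<lambda>v. card (nbrs V E v)) ` V)"

definition WA :: "'a set \<Rightarrow> ('a \<Rightarrow> 'a \<Rightarrow> bool) \<Rightarrow> ('a \<Rightarrow> 'a \<Rightarrow> rat) \<Rightarrow> 'a set \<Rightarrow> 'a \<Rightarrow> rat" where
  "WA V E w A v = (\<Sum>u \<in> nbrs V E v \<inter> A. w v u)"

definition Wmax :: "'a set \<Rightarrow> ('a \<Rightarrow> 'a \<Rightarrow> bool) \<Rightarrow> ('a \<Rightarrow> 'a \<Rightarrow> rat) \<Rightarrow> rat" where
  "Wmax V E w = Max ((\<lambda>v. WA V E w V v) ` V)"

definition hA :: "'a set \<Rightarrow> ('a \<Rightarrow> 'a \<Rightarrow> bool) \<Rightarrow> ('a \<Rightarrow> 'a \<Rightarrow> rat) \<Rightarrow> 'a set \<Rightarrow> 'a \<Rightarrow> rat" where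
  "hA V E w A v = (if v \<in> A \<or> WA V E w A v \<ge> WA V E w V v / 2 then WA V E w V v / 2
                   else WA V E w A v)"

definition hfun :: "'a set \<Rightarrow> ('a \<Rightarrow> 'a \<Rightarrow> bool) \<Rightarrow> ('a \<Rightarrow> 'a \<Rightarrow> rat) \<Rightarrow> 'a set \<Rightarrow> rat" where
  "hfun V E w A = (\<Sum>v \<in> V. hA V E w A v)"

definition denom :: "rat \<Rightarrow> int" where
  "denom x = snd (quotient_of x)"

definition lv :: "'a set \<Rightarrow> ('a \<Rightarrow> 'a \<Rightarrow> bool) \<Rightarrow> ('a \<Rightarrow> 'a \<Rightarrow> rat) \<Rightarrow> 'a \<Rightarrow> int" where
  "lv V E w v = Lcm (insert (denom (WA V E w V v / 2)) ((\<lambda>u. denom (w v u)) ` nbrs V E v))"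

definition Lmax :: "'a set \<Rightarrow> ('a \<Rightarrow> 'a \<Rightarrow> bool) \<Rightarrow> ('a \<Rightarrow> 'a \<Rightarrow> rat) \<Rightarrow> int" where
  "Lmax V E w = Max ((\<lambda>v. lv V E w v) ` V)"

definition pfun :: "'a set \<Rightarrow> ('a \<Rightarrow> 'a \<Rightarrow> bool) \<Rightarrow> 'a set \<Rightarrow> nat" where
  "pfun V E A = num_comps A E"

definition qfun :: "'a set \<Rightarrow> ('a \<Rightarrow> 'a \<Rightarrow> bool) \<Rightarrow> 'a set \<Rightarrow> nat" where
  "qfun V E A = num_comps V (\<lambda>a b. E a b \<and> (a \<in> A \<or> b \<in> A))"

definition cfun :: "'a set \<Rightarrow> ('a \<Rightarrow> 'a \<Rightarrow> bool) \<Rightarrow> ('a \<Rightarrow> 'a \<Rightarrow> rat) \<Rightarrow> 'a set \<Rightarrow> real" where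
  "cfun V E w A = (real (card V) - real (qfun V E A) - real (pfun V E A)) / real_of_int (Lmax V E w)"

definition ffun :: "'a set \<Rightarrow> ('a \<Rightarrow> 'a \<Rightarrow> bool) \<Rightarrow> ('a \<Rightarrow> 'a \<Rightarrow> rat) \<Rightarrow> 'a set \<Rightarrow> real" where
  "ffun V E w A = real_of_rat (hfun V E w A) + cfun V E w A"

text \<open>Sets reachable by a run of the greedy algorithm (ties broken arbitrarily).\<close>
inductive greedy_reach :: "('a set \<Rightarrow> real) \<Rightarrow> 'a set \<Rightarrow> 'a set \<Rightarrow> bool" for f U where
  start: "greedy_reach f U {}"
| step: "greedy_reach f U S \<Longrightarrow> u \<in> U - S \<Longrightarrow> f (S \<union> {u}) - f S > 0
         \<Longrightarrow> (\<forall>u' \<in> U - S. f (S \<union> {u'}) - f S \<le> f (S \<union> {u}) - f S)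
         \<Longrightarrow> greedy_reach f U (S \<union> {u})"

definition greedy_output :: "('a set \<Rightarrow> real) \<Rightarrow> 'a set \<Rightarrow> 'a set \<Rightarrow> bool" where
  "greedy_output f U S \<longleftrightarrow> greedy_reach f U S \<and> (\<forall>u \<in> U - S. \<not> f (S \<union> {u}) - f S > 0)"

definition is_WPPICDS :: "'a set \<Rightarrow> ('a \<Rightarrow> 'a \<Rightarrow> bool) \<Rightarrow> ('a \<Rightarrow> 'a \<Rightarrow> rat) \<Rightarrow> 'a set \<Rightarrow> bool" where
  "is_WPPICDS V E w S \<longleftrightarrow> S \<subseteq> V
     \<and> (\<forall>v \<in> V - S. WA V E w S v \<ge> WA V E w V v / 2)
     \<and> num_comps S E = 1"

end

theory Submission
  imports Defs
begin


definition crel :: "'a set \<Rightarrow> ('a \<Rightarrow> 'a \<Rightarrow> bool) \<Rightarrow> ('a \<times> 'a) set" where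
  "crel X R = {(a, b). a \<in> X \<and> b \<in> X \<and> R a b}"

definition cls :: "'a set \<Rightarrow> ('a \<Rightarrow> 'a \<Rightarrow> bool) \<Rightarrow> 'a \<Rightarrow> 'a set" where
  "cls X R x = {y \<in> X. (x, y) \<in> (crel X R)\<^sup>*}"

lemma num_comps_img: "num_comps X R = card (cls X R ` X)"
  unfolding num_comps_def cls_def crel_def by (simp add: Setcompr_eq_image)

lemma crel_rtrancl_in:
  assumes "(x, y) \<in> (crel X R)\<^sup>*" "x \<in> X" shows "y \<in> X"
  using assms by (induction rule: rtrancl_induct) (auto simp: crel_def)

lemma crel_sym:
  assumes "\<forall>a b. R a b \<longrightarrow> R b a" "(x, y) \<in> (crel X R)\<^sup>*"
  shows "(y, x) \<in> (crel X R)\<^sup>*"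
proof -
  have "(crel X R)\<inverse> = crel X R" using assms(1) by (auto simp: crel_def)
  then have "sym ((crel X R)\<^sup>*)"
    by (metis sym_conv_converse_eq sym_rtrancl)
  then show ?thesis using assms(2) by (meson symD)
qed

lemma cls_self: "x \<in> X \<Longrightarrow> x \<in> cls X R x"
  by (simp add: cls_def)

lemma cls_eq_iff:
  assumes "\<forall>a b. R a b \<longrightarrow> R b a" "x \<in> X" "y \<in> X"
  shows "cls X R x = cls X R y \<longleftrightarrow> (x, y) \<in> (crel X R)\<^sup>*"
proof
  assume "cls X R x = cls X R y"
  then have "y \<in> cls X R x" using cls_self[OF assms(3)] by simp
  then show "(x, y) \<in> (crel X R)\<^sup>*" by (simp add: cls_def)
next
  assume h: "(x, y) \<in> (crel X R)\<^sup>*"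
  have h2: "(y, x) \<in> (crel X R)\<^sup>*" using crel_sym[OF assms(1) h] .
  show "cls X R x = cls X R y"
    unfolding cls_def using h h2 by (meson rtrancl_trans)
qed

lemma cls_edge:
  assumes "\<forall>a b. R a b \<longrightarrow> R b a" "x \<in> X" "y \<in> X" "R x y"
  shows "cls X R x = cls X R y"
  using assms by (subst cls_eq_iff) (auto simp: crel_def)

lemma exit_edge:
  assumes "(x, y) \<in> r\<^sup>*" "x \<in> Y" "y \<notin> Y"
  shows "\<exists>a b. (a, b) \<in> r \<and> a \<in> Y \<and> b \<notin> Y"
  using assms by (induction rule: rtrancl_induct) auto

lemma cls_isolated:
  assumes "x \<in> X" "\<forall>y\<in>X. \<not> R x y"
  shows "cls X R x = {x}"
proof -
  have "y = x" if "(x, y) \<in> (crel X R)\<^sup>*" for y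
    using that by (cases rule: converse_rtranclE) (use assms in \<open>auto simp: crel_def\<close>)
  then show ?thesis using assms(1) by (auto simp: cls_def)
qed

lemma connected_path:
  assumes "num_comps X R = 1" "x \<in> X" "y \<in> X"
  shows "(x, y) \<in> (crel X R)\<^sup>*"
proof -
  have "card (cls X R ` X) = 1" using assms(1) by (simp add: num_comps_img)
  then obtain C where "cls X R ` X = {C}" by (meson card_1_singletonE)
  then have "cls X R x = cls X R y" using assms by (metis image_eqI singletonD)
  then have "y \<in> cls X R x" using cls_self[OF assms(3)] by simp
  then show ?thesis by (simp add: cls_def)
qed

lemma crel_mono_rt:
  assumes "X \<subseteq> X'" "\<And>a b. a \<in> X \<Longrightarrow> b \<in> X \<Longrightarrow> R a b \<Longrightarrow> R' a b"
    "(x, y) \<in> (crel X R)\<^sup>*"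
  shows "(x, y) \<in> (crel X' R')\<^sup>*"
proof -
  have "crel X R \<subseteq> crel X' R'" using assms(1,2) by (auto simp: crel_def)
  then show ?thesis using assms(3) rtrancl_mono by blast
qed

lemma count_fiber:
  assumes "finite S"
  shows "card (g ` S \<union> {t}) + card {s \<in> S. g s = t} \<le> card S + 1"
proof -
  let ?T = "{s \<in> S. g s = t}"
  have "g ` S \<union> {t} = g ` (S - ?T) \<union> {t}" by auto
  then have "card (g ` S \<union> {t}) \<le> card (g ` (S - ?T)) + 1"
    by (metis One_nat_def card_Un_le card.empty card.insert empty_iff finite.emptyI)
  also have "\<dots> \<le> card (S - ?T) + 1" using assms card_image_le by auto
  also have "card (S - ?T) = card S - card ?T" using assms by (simp add: card_Diff_subset)
  finally show ?thesis using assms card_mono[of S ?T] by auto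
qed

lemma qcount:
  assumes "finite A" "\<forall>x\<in>A. \<forall>y\<in>A. k x = k y \<longrightarrow> h x = h y"
  shows "card (h ` A \<union> {t}) + card (k ` {x \<in> A. h x = t}) \<le> card (k ` A) + 1"
proof -
  define g where "g C = h (SOME x. x \<in> A \<and> k x = C)" for C
  have g: "g (k x) = h x" if "x \<in> A" for x
  proof -
    have "\<exists>y. y \<in> A \<and> k y = k x" using that by blast
    then have "(SOME y. y \<in> A \<and> k y = k x) \<in> A \<and> k (SOME y. y \<in> A \<and> k y = k x) = k x"
      by (rule someI_ex)
    then show ?thesis using assms(2) that unfolding g_def by metis
  qed
  have e1: "h ` A = g ` (k ` A)" using g by (auto simp: image_image)
  have e2: "k ` {x \<in> A. h x = t} \<subseteq> {C \<in> k ` A. g C = t}" using g by auto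
  have "card (k ` {x \<in> A. h x = t}) \<le> card {C \<in> k ` A. g C = t}"
    using e2 assms(1) by (intro card_mono) auto
  moreover have "card (g ` (k ` A) \<union> {t}) + card {C \<in> k ` A. g C = t} \<le> card (k ` A) + 1"
    using assms(1) by (intro count_fiber) auto
  ultimately show ?thesis using e1 by simp
qed



locale G =
  fixes V :: "'a set" and E :: "'a \<Rightarrow> 'a \<Rightarrow> bool" and w :: "'a \<Rightarrow> 'a \<Rightarrow> rat"
  assumes sg: "simple_graph V E" and cardV: "card V \<ge> 2" and conn: "num_comps V E = 1"
    and wpos: "\<forall>u v. E u v \<longrightarrow> w u v > 0" and wsym: "\<forall>u v. w u v = w v u"
begin

abbreviation "N v \<equiv> nbrs V E v"
abbreviation "W v \<equiv> WA V E w V v"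
abbreviation "Rq A \<equiv> (\<lambda>a b. E a b \<and> (a \<in> A \<or> b \<in> A))"
abbreviation "kq A \<equiv> cls V (Rq A)"
abbreviation "kp A \<equiv> cls A E"

lemma finV: "finite V" using sg by (simp add: simple_graph_def)
lemma Esym: "E u v \<Longrightarrow> E v u" using sg by (simp add: simple_graph_def)
lemma Esym': "\<forall>a b. E a b \<longrightarrow> E b a" using Esym by blast
lemma EV: "E u v \<Longrightarrow> u \<in> V \<and> v \<in> V" using sg by (simp add: simple_graph_def)
lemma Eirr: "\<not> E v v" using sg by (simp add: simple_graph_def)
lemma N_sub: "N v \<subseteq> V" by (auto simp: nbrs_def)
lemma finN: "finite (N v)" using finV N_sub finite_subset by blast
lemma N_iff: "u \<in> N v \<longleftrightarrow> E v u" using EV by (auto simp: nbrs_def)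
lemma Rq_sym: "\<forall>a b. Rq A a b \<longrightarrow> Rq A b a" using Esym by blast

lemma nbr_exists:
  assumes "v \<in> V" shows "\<exists>u. E v u"
proof -
  obtain u where u: "u \<in> V" "u \<noteq> v"
  proof -
    have "V - {v} \<noteq> {}"
    proof
      assume "V - {v} = {}"
      then have "V \<subseteq> {v}" by blast
      then have "card V \<le> 1" using card_mono[of "{v}" V] by simp
      then show False using cardV by simp
    qed
    then show ?thesis using that by blast
  qed
  have "(v, u) \<in> (crel V E)\<^sup>*" using connected_path[OF conn assms u(1)] .
  then show ?thesis using u(2)
    by (cases rule: converse_rtranclE) (auto simp: crel_def)
qed

lemma WA_nonneg: "WA V E w A v \<ge> 0"
  unfolding WA_def by (intro sum_nonneg) (auto simp: nbrs_def wpos less_imp_le)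

lemma WA_mono: "A \<subseteq> A' \<Longrightarrow> WA V E w A v \<le> WA V E w A' v"
  unfolding WA_def
  by (intro sum_mono2) (auto simp: nbrs_def wpos less_imp_le intro: finite_subset[OF _ finN])

lemma W_pos: "v \<in> V \<Longrightarrow> W v > 0"
proof -
  assume v: "v \<in> V"
  obtain u where u: "E v u" using nbr_exists[OF v] by blast
  have "w v u \<le> W v" unfolding WA_def
    using u EV finN[of v] wpos
    by (intro member_le_sum) (auto simp: nbrs_def less_imp_le)
  then show ?thesis using wpos u by (meson less_le_trans)
qed

lemma WA_insert:
  assumes "b \<notin> A"
  shows "WA V E w (insert b A) v = WA V E w A v + (if E v b then w v b else 0)"
proof -
  have "N v \<inter> insert b A = (if E v b then insert b (N v \<inter> A) else N v \<inter> A)"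
    using EV by (auto simp: nbrs_def)
  then show ?thesis unfolding WA_def using assms finN[of v]
    by (auto intro: finite_subset)
qed

lemma hA_alt: "hA V E w A v = (if v \<in> A then W v / 2 else min (WA V E w A v) (W v / 2))"
  by (auto simp: hA_def)

lemma hA_mono: "A \<subseteq> A' \<Longrightarrow> hA V E w A v \<le> hA V E w A' v"
  using WA_mono[of A A' v] WA_mono[of A' V v] by (auto simp: hA_alt)

lemma hA_le: "hA V E w A v \<le> W v / 2" by (auto simp: hA_alt)

lemma hA_nonneg: "hA V E w A v \<ge> 0"
  using WA_nonneg[of A v] WA_nonneg[of V v] by (auto simp: hA_alt)

lemma hfun_mono: "A \<subseteq> A' \<Longrightarrow> hfun V E w A \<le> hfun V E w A'"
  unfolding hfun_def by (intro sum_mono hA_mono)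

lemma q_step:
  assumes "b \<in> V"
  shows "qfun V E (insert b A) + card (kq A ` insert b (N b)) \<le> qfun V E A + 1"
proof -
  let ?h = "kq (insert b A)"
  have cond: "\<forall>x\<in>V. \<forall>y\<in>V. kq A x = kq A y \<longrightarrow> ?h x = ?h y"
  proof (intro ballI impI)
    fix x y assume xy: "x \<in> V" "y \<in> V" "kq A x = kq A y"
    then have "(x, y) \<in> (crel V (Rq A))\<^sup>*" using cls_eq_iff[OF Rq_sym] by blast
    then have "(x, y) \<in> (crel V (Rq (insert b A)))\<^sup>*" by (rule crel_mono_rt[rotated 2]) auto
    then show "?h x = ?h y" using cls_eq_iff[OF Rq_sym] xy by blast
  qed
  have c: "card (?h ` V \<union> {?h b}) + card (kq A ` {x \<in> V. ?h x = ?h b}) \<le> card (kq A ` V) + 1"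
    by (rule qcount[OF finV cond])
  have e1: "?h ` V \<union> {?h b} = ?h ` V" using assms by auto
  have sub: "insert b (N b) \<subseteq> {x \<in> V. ?h x = ?h b}"
  proof
    fix x assume "x \<in> insert b (N b)"
    then show "x \<in> {x \<in> V. ?h x = ?h b}"
    proof
      assume "x = b" then show ?thesis using assms by simp
    next
      assume "x \<in> N b"
      then have "E b x" "x \<in> V" using N_iff EV by auto
      then show ?thesis using cls_edge[OF Rq_sym[of "insert b A"], where X=V and x=b and y=x] assms by auto
    qed
  qed
  have "card (kq A ` insert b (N b)) \<le> card (kq A ` {x \<in> V. ?h x = ?h b})"
    using sub finV by (intro card_mono) auto
  then show ?thesis using c e1 unfolding qfun_def num_comps_img by simp
qed

lemma p_step:
  assumes "b \<in> V" "b \<notin> A" "finite A"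
  shows "pfun V E (insert b A) + card (kp A ` (N b \<inter> A)) \<le> pfun V E A + 1"
proof -
  let ?h = "cls (insert b A) E"
  have cond: "\<forall>x\<in>A. \<forall>y\<in>A. kp A x = kp A y \<longrightarrow> ?h x = ?h y"
  proof (intro ballI impI)
    fix x y assume xy: "x \<in> A" "y \<in> A" "kp A x = kp A y"
    then have "(x, y) \<in> (crel A E)\<^sup>*" using cls_eq_iff[OF Esym'] by blast
    then have "(x, y) \<in> (crel (insert b A) E)\<^sup>*" by (rule crel_mono_rt[rotated 2]) auto
    then show "?h x = ?h y" using cls_eq_iff[OF Esym'] xy by blast
  qed
  have c: "card (?h ` A \<union> {?h b}) + card (kp A ` {x \<in> A. ?h x = ?h b}) \<le> card (kp A ` A) + 1"
    by (rule qcount[OF assms(3) cond])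
  have e1: "?h ` A \<union> {?h b} = ?h ` (insert b A)" by auto
  have sub: "N b \<inter> A \<subseteq> {x \<in> A. ?h x = ?h b}"
  proof
    fix x assume x: "x \<in> N b \<inter> A"
    then have "E b x" using N_iff by auto
    then show "x \<in> {x \<in> A. ?h x = ?h b}" using cls_edge[OF Esym', where X="insert b A" and x=b and y=x] x by auto
  qed
  have "card (kp A ` (N b \<inter> A)) \<le> card (kp A ` {x \<in> A. ?h x = ?h b})"
    using sub assms(3) by (intro card_mono) auto
  then show ?thesis using c e1 unfolding pfun_def num_comps_img by simp
qed

end


lemma grow_lemma:
  fixes M :: "'a \<Rightarrow> 'b set"
  assumes finB: "finite B" and conB: "num_comps B R = 1"
    and inter: "\<And>a b. a \<in> B \<Longrightarrow> b \<in> B \<Longrightarrow> R a b \<Longrightarrow> M a \<inter> M b \<noteq> {}"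
    and finM: "\<And>b. finite (M b)"
  shows "card (\<Union>(M ` B)) + card B \<le> (\<Sum>b\<in>B. card (M b)) + 1"
proof -
  have Bne: "B \<noteq> {}" using conB by (auto simp: num_comps_img)
  have "\<forall>n. 1 \<le> n \<longrightarrow> n \<le> card B \<longrightarrow> (\<exists>X\<subseteq>B. card X = n \<and>
      card (\<Union>(M ` X)) + card X \<le> (\<Sum>b\<in>X. card (M b)) + 1)"
  proof (intro allI)
    fix n show "1 \<le> n \<longrightarrow> n \<le> card B \<longrightarrow> (\<exists>X\<subseteq>B. card X = n \<and>
      card (\<Union>(M ` X)) + card X \<le> (\<Sum>b\<in>X. card (M b)) + 1)"
    proof (induction n)
      case 0 then show ?case by simp
    next
      case (Suc n)
      show ?case
      proof (intro impI)
        assume h1: "1 \<le> Suc n" and h2: "Suc n \<le> card B"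
        show "\<exists>X\<subseteq>B. card X = Suc n \<and> card (\<Union>(M ` X)) + card X \<le> (\<Sum>b\<in>X. card (M b)) + 1"
        proof (cases "n = 0")
          case True
          obtain b where b: "b \<in> B" using Bne by blast
          show ?thesis using b True by (intro exI[of _ "{b}"]) auto
        next
          case False
          then obtain X where X: "X \<subseteq> B" "card X = n"
            "card (\<Union>(M ` X)) + card X \<le> (\<Sum>b\<in>X. card (M b)) + 1"
            using Suc.IH h2 by auto
          have finX: "finite X" using X(1) finB finite_subset by blast
          obtain x where x: "x \<in> X" using False X(2) by fastforce
          have "\<not> B \<subseteq> X"
          proof
            assume "B \<subseteq> X"
            then have "card B \<le> card X" using card_mono[OF finX] by blast
            then show False using X(2) h2 by simp
          qed
          then obtain y where y: "y \<in> B" "y \<notin> X" by blast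
          have "(x, y) \<in> (crel B R)\<^sup>*" using connected_path[OF conB] x y X(1) by blast
          then obtain a b where ab: "(a, b) \<in> crel B R" "a \<in> X" "b \<notin> X"
            using exit_edge[of x y "crel B R" X] x y by blast
          then have abB: "a \<in> B" "b \<in> B" "R a b" by (auto simp: crel_def)
          have ne: "M b \<inter> \<Union>(M ` X) \<noteq> {}" using inter[OF abB] ab(2) by blast
          have fU: "finite (\<Union>(M ` X))" using finX finM by blast
          have cU: "card (M b \<union> \<Union>(M ` X)) + card (M b \<inter> \<Union>(M ` X)) = card (M b) + card (\<Union>(M ` X))"
            using card_Un_Int[OF finM fU] by simp
          have "finite (M b \<inter> \<Union>(M ` X))" using finM by blast
          then have "card (M b \<inter> \<Union>(M ` X)) \<ge> 1" using ne
            by (simp add: Suc_leI card_gt_0_iff)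
          then have cU2: "card (\<Union>(M ` insert b X)) + 1 \<le> card (M b) + card (\<Union>(M ` X))"
            using cU by simp
          have s: "(\<Sum>c\<in>insert b X. card (M c)) = card (M b) + (\<Sum>c\<in>X. card (M c))"
            using finX ab(3) by simp
          have c: "card (insert b X) = Suc n" using finX ab(3) X(2) by simp
          show ?thesis using X(1) X(2) abB(2) c cU2 s X(3) by (intro exI[of _ "insert b X"]) auto
        qed
      qed
    qed
  qed
  moreover have "1 \<le> card B" using Bne finB by (simp add: Suc_leI card_gt_0_iff)
  ultimately obtain X where X: "X \<subseteq> B" "card X = card B"
      "card (\<Union>(M ` X)) + card X \<le> (\<Sum>b\<in>X. card (M b)) + 1"
    by blast
  have "X = B" using card_subset_eq[OF finB X(1,2)] .
  then show ?thesis using X(3) by simp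
qed

lemma minsum:
  fixes c :: "'b \<Rightarrow> rat"
  assumes "finite I" "\<forall>i. c i \<ge> 0" "D \<ge> 0"
  shows "min (\<Sum>i\<in>I. c i) D \<le> (\<Sum>i\<in>I. min (c i) D)"
  using assms(1)
proof (induction I rule: finite_induct)
  case empty then show ?case using assms by simp
next
  case (insert a I)
  have "(\<Sum>i\<in>I. c i) \<ge> 0" using assms by (simp add: sum_nonneg)
  then have "min (c a + (\<Sum>i\<in>I. c i)) D \<le> min (c a) D + min (\<Sum>i\<in>I. c i) D"
    using assms(2)[rule_format, of a] assms(3) by (simp add: min_def)
  then show ?case using insert by simp
qed

context G
begin

definition dom_set :: "'a set \<Rightarrow> bool" where
  "dom_set B \<longleftrightarrow> (\<forall>v \<in> V - B. WA V E w B v \<ge> W v / 2)"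

lemma dom_nbr:
  assumes "dom_set B" "v \<in> V" "v \<notin> B"
  shows "\<exists>b\<in>B. E v b"
proof (rule ccontr)
  assume "\<not> ?thesis"
  then have "N v \<inter> B = {}" using N_iff by blast
  then have "WA V E w B v = 0" by (simp add: WA_def)
  moreover have "W v / 2 \<le> WA V E w B v" using assms by (auto simp: dom_set_def)
  ultimately show False using W_pos[OF assms(2)] by linarith
qed

abbreviation "dq A b \<equiv> card (kq A ` insert b (N b))"
abbreviation "mq A b \<equiv> card (kp A ` (N b \<inter> A))"

lemma c_gain:
  assumes "b \<in> V" "b \<notin> A" "A \<subseteq> V"
  shows "real (qfun V E A) + real (pfun V E A) - real (qfun V E (insert b A)) - real (pfun V E (insert b A))
     \<ge> real (dq A b) + real (mq A b) - 2"
  using q_step[OF assms(1), of A] p_step[OF assms(1,2) finite_subset[OF assms(3) finV]] by linarith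

lemma dq_pos: "dq A b \<ge> 1"
proof -
  have "finite (kq A ` insert b (N b))" using finN by simp
  moreover have "kq A b \<in> kq A ` insert b (N b)" by simp
  ultimately show ?thesis by (simp add: Suc_leI card_gt_0_iff)
qed

lemma c_gain_nonneg:
  assumes "b \<in> V" "b \<notin> A" "A \<subseteq> V"
  shows "real (qfun V E A) + real (pfun V E A) - real (qfun V E (insert b A)) - real (pfun V E (insert b A)) \<ge> 0"
proof (cases "mq A b = 0")
  case False
  then show ?thesis using c_gain[OF assms] dq_pos[of A b] by linarith
next
  case True
  have finA: "finite A" using assms(3) finV finite_subset by blast
  then have "N b \<inter> A = {}" using True by simp
  then have iso: "\<forall>y\<in>V. \<not> Rq A b y" using assms(2) N_iff by blast
  have kb: "kq A b = {b}" using cls_isolated[of b V "Rq A"] assms(1) iso by blast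
  obtain u where u: "E b u" using nbr_exists[OF assms(1)] by blast
  have uV: "u \<in> V" using EV u by blast
  have "u \<in> kq A u" using cls_self[OF uV] .
  moreover have "u \<noteq> b" using u Eirr by blast
  ultimately have neq: "kq A u \<noteq> kq A b" using kb by auto
  have "{kq A u, kq A b} \<subseteq> kq A ` insert b (N b)" using u N_iff by auto
  then have "card {kq A u, kq A b} \<le> dq A b" using finN by (intro card_mono) auto
  then have "dq A b \<ge> 2" using neq by simp
  then show ?thesis using c_gain[OF assms] by linarith
qed

lemma K1:
  assumes AV: "A \<subseteq> V" and BV: "B \<subseteq> V" and domB: "dom_set B" and conB: "num_comps B E = 1"
  shows "int (qfun V E A) - 1 \<le> (\<Sum>b\<in>B - A. int (dq A b) - 1)"
proof -
  let ?M = "\<lambda>b. kq A ` insert b (N b)"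
  have finB: "finite B" using BV finV finite_subset by blast
  have g: "card (\<Union>(?M ` B)) + card B \<le> (\<Sum>b\<in>B. card (?M b)) + 1"
  proof (rule grow_lemma[OF finB conB])
    fix a b assume "a \<in> B" "b \<in> B" "E a b"
    then have "kq A b \<in> ?M a \<inter> ?M b" using N_iff by auto
    then show "?M a \<inter> ?M b \<noteq> {}" by blast
  qed (use finN in simp)
  have U: "\<Union>(?M ` B) = kq A ` V"
  proof
    show "\<Union>(?M ` B) \<subseteq> kq A ` V" using BV N_sub by auto
    show "kq A ` V \<subseteq> \<Union>(?M ` B)"
    proof
      fix C assume "C \<in> kq A ` V"
      then obtain v where v: "v \<in> V" "C = kq A v" by blast
      show "C \<in> \<Union>(?M ` B)"
      proof (cases "v \<in> B")
        case True then show ?thesis using v by auto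
      next
        case False
        then obtain b where "b \<in> B" "E v b" using dom_nbr[OF domB v(1)] by blast
        then have "b \<in> B" "v \<in> N b" using N_iff Esym by auto
        then have "C \<in> ?M b" using v(2) by blast
        then show ?thesis using \<open>b \<in> B\<close> by blast
      qed
    qed
  qed
  have one: "card (?M b) = 1" if b: "b \<in> B \<inter> A" for b
  proof -
    have bV: "b \<in> V" using b BV by blast
    have "?M b = {kq A b}"
    proof -
      have "kq A x = kq A b" if x: "x \<in> N b" for x
      proof -
        have "E b x" "x \<in> V" using x N_iff N_sub by auto
        moreover have "b \<in> A" using b by blast
        ultimately show ?thesis using cls_edge[OF Rq_sym[of A], where X=V and x=b and y=x] bV by simp
      qed
      then show ?thesis by blast
    qed
    then have "card (?M b) = card {kq A b}" by (rule arg_cong)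
    then show ?thesis by simp
  qed
  have split: "(\<Sum>b\<in>B. card (?M b)) = (\<Sum>b\<in>B - A. card (?M b)) + card (B \<inter> A)"
  proof -
    have "(\<Sum>b\<in>B. card (?M b)) = (\<Sum>b\<in>B - A. card (?M b)) + (\<Sum>b\<in>B \<inter> A. card (?M b))"
      using sum.Int_Diff[OF finB, of "\<lambda>b. card (?M b)" A] by simp
    also have "(\<Sum>b\<in>B \<inter> A. card (?M b)) = card (B \<inter> A)" using one by simp
    finally show ?thesis .
  qed
  have cB: "card B = card (B - A) + card (B \<inter> A)"
    using card_Int_Diff[OF finB, of A] by simp
  have "qfun V E A = card (kq A ` V)" by (simp add: qfun_def num_comps_img)
  then have qU: "card (\<Union>(?M ` B)) = qfun V E A" using U by simp
  have nat: "qfun V E A + card (B - A) \<le> (\<Sum>b\<in>B - A. card (?M b)) + 1"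
    using g qU split cB by linarith
  then have "int (qfun V E A + card (B - A)) \<le> int ((\<Sum>b\<in>B - A. card (?M b)) + 1)"
    by (simp only: of_nat_le_iff)
  then have "int (qfun V E A) + int (card (B - A)) \<le> (\<Sum>b\<in>B - A. int (card (?M b))) + 1"
    by simp
  moreover have "(\<Sum>b\<in>B - A. int (dq A b) - 1) = (\<Sum>b\<in>B - A. int (dq A b)) - int (card (B - A))"
    by (simp add: sum_subtractf)
  ultimately show ?thesis by linarith
qed

lemma K2:
  assumes AV: "A \<subseteq> V" and BV: "B \<subseteq> V" and domB: "dom_set B"
  shows "pfun V E A \<le> (\<Sum>b\<in>B - A. mq A b) + card (B \<inter> A)"
proof -
  have finA: "finite A" using AV finV finite_subset by blast
  have finB: "finite B" using BV finV finite_subset by blast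
  have sub: "kp A ` A \<subseteq> (\<Union>b\<in>B - A. kp A ` (N b \<inter> A)) \<union> kp A ` (B \<inter> A)"
  proof
    fix C assume "C \<in> kp A ` A"
    then obtain x where x: "x \<in> A" "C = kp A x" by blast
    show "C \<in> (\<Union>b\<in>B - A. kp A ` (N b \<inter> A)) \<union> kp A ` (B \<inter> A)"
    proof (cases "x \<in> B")
      case True then show ?thesis using x by auto
    next
      case False
      then obtain b where b: "b \<in> B" "E x b" using dom_nbr[OF domB] x AV by blast
      show ?thesis
      proof (cases "b \<in> A")
        case True
        then have "kp A x = kp A b" using cls_edge[OF Esym', where X=A and x=x and y=b] x b by auto
        then show ?thesis using x b True by auto
      next
        case False
        then have "x \<in> N b \<inter> A" using x b Esym N_iff by auto
        then show ?thesis using x b False by auto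
      qed
    qed
  qed
  have "pfun V E A = card (kp A ` A)" by (simp add: pfun_def num_comps_img)
  also have "\<dots> \<le> card ((\<Union>b\<in>B - A. kp A ` (N b \<inter> A)) \<union> kp A ` (B \<inter> A))"
    using sub finA finB by (intro card_mono) auto
  also have "\<dots> \<le> card (\<Union>b\<in>B - A. kp A ` (N b \<inter> A)) + card (kp A ` (B \<inter> A))"
    by (rule card_Un_le)
  also have "\<dots> \<le> (\<Sum>b\<in>B - A. mq A b) + card (B \<inter> A)"
    using card_UN_le[of "B - A" "\<lambda>b. kp A ` (N b \<inter> A)"] finB card_image_le[of "B \<inter> A" "kp A"]
    by (simp add: add_mono)
  finally show ?thesis .
qed

end


context G
begin

lemma K3v:
  assumes AV: "A \<subseteq> V" and BV: "B \<subseteq> V" and domB: "dom_set B" and v: "v \<in> V"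
  shows "W v / 2 - hA V E w A v \<le> (\<Sum>b\<in>B - A. hA V E w (insert b A) v - hA V E w A v)"
proof -
  have finB: "finite B" using BV finV finite_subset by blast
  have nn: "\<forall>b\<in>B - A. hA V E w (insert b A) v - hA V E w A v \<ge> 0"
    using hA_mono[of A] by (simp add: subset_insertI)
  show ?thesis
  proof (cases "v \<in> A \<or> WA V E w A v \<ge> W v / 2")
    case True
    then have "W v / 2 - hA V E w A v = 0" by (auto simp: hA_def)
    moreover have "0 \<le> (\<Sum>b\<in>B - A. hA V E w (insert b A) v - hA V E w A v)"
      using nn by (intro sum_nonneg) auto
    ultimately show ?thesis by simp
  next
    case False
    then have vA: "v \<notin> A" and lt: "WA V E w A v < W v / 2" by auto
    have hv: "hA V E w A v = WA V E w A v" using vA lt by (simp add: hA_def)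
    show ?thesis
    proof (cases "v \<in> B")
      case True
      have "hA V E w (insert v A) v = W v / 2" by (simp add: hA_def)
      then have "W v / 2 - hA V E w A v = hA V E w (insert v A) v - hA V E w A v" by simp
      also have "\<dots> \<le> (\<Sum>b\<in>B - A. hA V E w (insert b A) v - hA V E w A v)"
        using True vA nn finB by (intro member_le_sum) auto
      finally show ?thesis .
    next
      case False
      define c where "c b = (if E v b then w v b else 0)" for b
      define D where "D = W v / 2 - WA V E w A v"
      have Dpos: "D \<ge> 0" using lt by (simp add: D_def)
      have cnn: "\<forall>b. c b \<ge> 0" using wpos by (auto simp: c_def less_imp_le)
      have trm: "hA V E w (insert b A) v - hA V E w A v = min (c b) D" if b: "b \<in> B - A" for b
      proof -
        have "v \<notin> insert b A" using b False vA by auto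
        then have "hA V E w (insert b A) v = min (WA V E w A v + c b) (W v / 2)"
          using WA_insert[of b A v] b by (auto simp: hA_alt c_def)
        then show ?thesis using hv by (auto simp: D_def min_def)
      qed
      have sc: "(\<Sum>b\<in>B - A. c b) = WA V E w (B - A) v"
      proof -
        have "(\<Sum>b\<in>B - A. c b) = (\<Sum>b\<in>B - A. if b \<in> N v then w v b else 0)"
          using N_iff by (auto simp: c_def intro!: sum.cong)
        also have "\<dots> = (\<Sum>b\<in>(B - A) \<inter> N v. w v b)"
          using finB by (simp add: sum.inter_restrict)
        also have "\<dots> = WA V E w (B - A) v" unfolding WA_def by (simp add: Int_commute)
        finally show ?thesis .
      qed
      have wb: "WA V E w B v = WA V E w (B - A) v + WA V E w (B \<inter> A) v"
      proof -
        have "N v \<inter> B = (N v \<inter> (B - A)) \<union> (N v \<inter> (B \<inter> A))" by blast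
        moreover have "sum (w v) ((N v \<inter> (B - A)) \<union> (N v \<inter> (B \<inter> A)))
            = sum (w v) (N v \<inter> (B - A)) + sum (w v) (N v \<inter> (B \<inter> A))"
          using finN[of v] by (intro sum.union_disjoint) auto
        ultimately show ?thesis unfolding WA_def by simp
      qed
      have "WA V E w (B \<inter> A) v \<le> WA V E w A v" by (rule WA_mono) auto
      moreover have "WA V E w B v \<ge> W v / 2" using domB v False by (auto simp: dom_set_def)
      ultimately have ge: "(\<Sum>b\<in>B - A. c b) \<ge> D" using sc wb by (simp add: D_def)
      have "W v / 2 - hA V E w A v = min (\<Sum>b\<in>B - A. c b) D" using ge hv by (simp add: D_def)
      also have "\<dots> \<le> (\<Sum>b\<in>B - A. min (c b) D)" using minsum[of "B - A" c D] finB cnn Dpos by simp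
      also have "\<dots> = (\<Sum>b\<in>B - A. hA V E w (insert b A) v - hA V E w A v)"
        using trm by simp
      finally show ?thesis .
    qed
  qed
qed

definition hmax :: rat where "hmax = (\<Sum>v\<in>V. W v / 2)"

lemma K3:
  assumes AV: "A \<subseteq> V" and BV: "B \<subseteq> V" and domB: "dom_set B"
  shows "hmax - hfun V E w A \<le> (\<Sum>b\<in>B - A. hfun V E w (insert b A) - hfun V E w A)"
proof -
  have "hmax - hfun V E w A = (\<Sum>v\<in>V. W v / 2 - hA V E w A v)"
    unfolding hmax_def hfun_def by (rule sum_subtractf[symmetric])
  also have "\<dots> \<le> (\<Sum>v\<in>V. \<Sum>b\<in>B - A. hA V E w (insert b A) v - hA V E w A v)"
    by (intro sum_mono K3v[OF assms])
  also have "\<dots> = (\<Sum>b\<in>B - A. \<Sum>v\<in>V. hA V E w (insert b A) v - hA V E w A v)"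
    by (rule sum.swap)
  also have "\<dots> = (\<Sum>b\<in>B - A. hfun V E w (insert b A) - hfun V E w A)"
    unfolding hfun_def by (simp only: sum_subtractf)
  finally show ?thesis .
qed

abbreviation "L \<equiv> Lmax V E w"

lemma lv_pos: "lv V E w v \<ge> 1"
proof -
  let ?S = "insert (denom (W v / 2)) ((\<lambda>u. denom (w v u)) ` N v)"
  have fin: "finite ?S" using finN by simp
  have dpos: "\<forall>x. denom x > 0" using quotient_of_denom_pos' by (simp add: denom_def)
  have "0 \<notin> ?S"
  proof
    assume "0 \<in> ?S"
    then obtain x where "denom x = 0" by auto
    then show False using dpos by (metis less_irrefl)
  qed
  then have "Lcm ?S \<noteq> 0" using Lcm_0_iff[OF fin] by blast
  moreover have "Lcm ?S \<ge> 0" by (rule Lcm_int_greater_eq_0)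
  ultimately have "Lcm ?S \<ge> 1" by linarith
  then show ?thesis by (simp only: lv_def)
qed

lemma lv_le: "v \<in> V \<Longrightarrow> lv V E w v \<le> L"
  unfolding Lmax_def using finV by (intro Max_ge) auto

lemma L_pos: "L \<ge> 1"
proof -
  have "V \<noteq> {}" using cardV by auto
  then obtain v where "v \<in> V" by blast
  then show ?thesis using lv_pos[of v] lv_le[of v] by linarith
qed

definition fmax :: real where
  "fmax = real_of_rat hmax + (real (card V) - 2) / real_of_int L"

lemma div_aux: "(a - b1 - b2) / (d::real) - (a - c1 - c2) / d = (c1 + c2 - b1 - b2) / d"
proof -
  have "(a - b1 - b2) / d - (a - c1 - c2) / d = ((a - b1 - b2) - (a - c1 - c2)) / d"
    by (rule diff_divide_distrib[symmetric])
  also have "(a - b1 - b2) - (a - c1 - c2) = c1 + c2 - b1 - b2" by simp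
  finally show ?thesis .
qed

lemma gain_eq:
  "ffun V E w (insert b X) - ffun V E w X =
     real_of_rat (hfun V E w (insert b X) - hfun V E w X) +
     (real (qfun V E X) + real (pfun V E X) - real (qfun V E (insert b X)) - real (pfun V E (insert b X))) / real_of_int L"
  unfolding ffun_def cfun_def of_rat_diff
  using div_aux[of "real (card V)" "real (qfun V E (insert b X))" "real (pfun V E (insert b X))"
      "real_of_int L" "real (qfun V E X)" "real (pfun V E X)"] by linarith

lemma key:
  assumes AV: "A \<subseteq> V" and BV: "B \<subseteq> V" and domB: "dom_set B" and conB: "num_comps B E = 1"
  shows "fmax - ffun V E w A - (real (card B) - 1) / real_of_int L
     \<le> (\<Sum>b\<in>B - A. ffun V E w (insert b A) - ffun V E w A)"
proof -
  have finB: "finite B" using BV finV finite_subset by blast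
  have Lp: "real_of_int L > 0" using L_pos by simp
  define cd where "cd b = real (qfun V E A) + real (pfun V E A) - real (qfun V E (insert b A)) - real (pfun V E (insert b A))" for b
  have s1: "(\<Sum>b\<in>B - A. ffun V E w (insert b A) - ffun V E w A)
      = real_of_rat (\<Sum>b\<in>B - A. hfun V E w (insert b A) - hfun V E w A) + (\<Sum>b\<in>B - A. cd b) / real_of_int L"
    unfolding gain_eq cd_def by (simp add: sum.distrib sum_divide_distrib of_rat_sum)
  have h: "real_of_rat (hmax - hfun V E w A) \<le> real_of_rat (\<Sum>b\<in>B - A. hfun V E w (insert b A) - hfun V E w A)"
    using K3[OF AV BV domB] by (simp add: of_rat_less_eq)
  have c1: "(\<Sum>b\<in>B - A. cd b) \<ge> (\<Sum>b\<in>B - A. real (dq A b) + real (mq A b) - 2)"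
    unfolding cd_def using AV BV by (intro sum_mono c_gain) auto
  have k1: "real (qfun V E A) - 1 \<le> (\<Sum>b\<in>B - A. real (dq A b) - 1)"
  proof -
    have "int (qfun V E A) - 1 \<le> (\<Sum>b\<in>B - A. int (dq A b) - 1)" by (rule K1[OF AV BV domB conB])
    then have "real_of_int (int (qfun V E A) - 1) \<le> real_of_int (\<Sum>b\<in>B - A. int (dq A b) - 1)"
      by (simp only: of_int_le_iff)
    then show ?thesis by (simp add: of_int_sum)
  qed
  have k2: "real (pfun V E A) \<le> (\<Sum>b\<in>B - A. real (mq A b)) + real (card (B \<inter> A))"
  proof -
    have "real (pfun V E A) \<le> real ((\<Sum>b\<in>B - A. mq A b) + card (B \<inter> A))"
      using K2[OF AV BV domB] by (simp only: of_nat_le_iff)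
    then show ?thesis by simp
  qed
  have cB: "card B = card (B - A) + card (B \<inter> A)"
    using card_Int_Diff[OF finB, of A] by simp
  have "(\<Sum>b\<in>B - A. real (dq A b) + real (mq A b) - 2)
      = (\<Sum>b\<in>B - A. real (dq A b) - 1) + (\<Sum>b\<in>B - A. real (mq A b)) - real (card (B - A))"
    by (simp add: sum.distrib sum_subtractf)
  then have c2: "(\<Sum>b\<in>B - A. cd b) \<ge> real (qfun V E A) + real (pfun V E A) - 1 - real (card B)"
    using c1 k1 k2 cB by simp
  have f: "fmax - ffun V E w A = real_of_rat (hmax - hfun V E w A)
      + (real (qfun V E A) + real (pfun V E A) - 2) / real_of_int L"
  proof -
    have "(real (card V) - 2) / real_of_int L - (real (card V) - real (qfun V E A) - real (pfun V E A)) / real_of_int L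
        = ((real (card V) - 2) - (real (card V) - real (qfun V E A) - real (pfun V E A))) / real_of_int L"
      by (rule diff_divide_distrib[symmetric])
    also have "\<dots> = (real (qfun V E A) + real (pfun V E A) - 2) / real_of_int L"
      by (rule arg_cong[where f="\<lambda>x. x / real_of_int L"]) simp
    finally show ?thesis unfolding fmax_def ffun_def cfun_def by (simp add: of_rat_diff)
  qed
  have "(real (qfun V E A) + real (pfun V E A) - 2) / real_of_int L - (real (card B) - 1) / real_of_int L
     = (real (qfun V E A) + real (pfun V E A) - 1 - real (card B)) / real_of_int L"
    unfolding diff_divide_distrib[symmetric]
    by (rule arg_cong[where f="\<lambda>x. x / real_of_int L"]) simp
  also have "\<dots> \<le> (\<Sum>b\<in>B - A. cd b) / real_of_int L"
    using c2 Lp by (simp add: divide_right_mono)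
  finally show ?thesis using s1 h f by linarith
qed

end


lemma denom_int:
  assumes "denom x dvd l" shows "x * rat_of_int l \<in> \<int>"
proof -
  obtain a b where q: "quotient_of x = (a, b)" by (cases "quotient_of x") auto
  have x: "x = of_int a / of_int b" using quotient_of_div[OF q] .
  have bpos: "b > 0" using quotient_of_denom_pos[OF q] .
  have "b dvd l" using assms q by (simp add: denom_def)
  then obtain c where l: "l = b * c" by (auto elim: dvdE)
  have bnz: "rat_of_int b \<noteq> 0" using bpos by simp
  have "x * rat_of_int l = of_int a / of_int b * (of_int b * of_int c)" by (simp add: x l)
  also have "\<dots> = of_int a * of_int c" using bnz by simp
  finally have "x * rat_of_int l = of_int (a * c)" by simp
  then show ?thesis by simp
qed

lemma Ints_pos_ge1: "(x::rat) \<in> \<int> \<Longrightarrow> x > 0 \<Longrightarrow> x \<ge> 1"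
  by (auto elim!: Ints_cases)

context G
begin

lemma hA_int:
  assumes v: "v \<in> V" shows "hA V E w A v * rat_of_int (lv V E w v) \<in> \<int>"
proof -
  let ?S = "insert (denom (W v / 2)) ((\<lambda>u. denom (w v u)) ` N v)"
  have l: "lv V E w v = Lcm ?S" by (simp add: lv_def)
  have i1: "(W v / 2) * rat_of_int (lv V E w v) \<in> \<int>"
    unfolding l by (rule denom_int) (rule dvd_Lcm, simp)
  have i2: "WA V E w A v * rat_of_int (lv V E w v) \<in> \<int>"
  proof -
    have "WA V E w A v * rat_of_int (lv V E w v) = (\<Sum>u\<in>N v \<inter> A. w v u * rat_of_int (lv V E w v))"
      by (simp add: WA_def sum_distrib_right)
    also have "\<dots> \<in> \<int>"
    proof (rule Ints_sum)
      fix u assume "u \<in> N v \<inter> A"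
      then show "w v u * rat_of_int (lv V E w v) \<in> \<int>"
        unfolding l by (intro denom_int dvd_Lcm) auto
    qed
    finally show ?thesis .
  qed
  show ?thesis using i1 i2 by (auto simp: hA_def)
qed

lemma hdiff_gran:
  assumes "A \<subseteq> A'" "hfun V E w A' - hfun V E w A > 0"
  shows "hfun V E w A' - hfun V E w A \<ge> 1 / rat_of_int L"
proof -
  define d where "d v = hA V E w A' v - hA V E w A v" for v
  have dnn: "d v \<ge> 0" for v using hA_mono[OF assms(1)] by (simp add: d_def)
  have sum: "hfun V E w A' - hfun V E w A = (\<Sum>v\<in>V. d v)"
    by (simp add: hfun_def d_def sum_subtractf)
  obtain v where v: "v \<in> V" "d v > 0"
  proof (rule ccontr)
    assume "\<not> thesis"
    then have "\<forall>v\<in>V. d v \<le> 0" using that by (meson not_le)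
    then have "(\<Sum>v\<in>V. d v) \<le> 0" by (simp add: sum_nonpos)
    then show False using assms(2) sum by simp
  qed
  have "d v * rat_of_int (lv V E w v) \<in> \<int>"
    using hA_int[OF v(1), of A'] hA_int[OF v(1), of A] by (simp add: d_def left_diff_distrib)
  moreover have lvp: "rat_of_int (lv V E w v) > 0" using lv_pos[of v] by simp
  ultimately have "d v * rat_of_int (lv V E w v) \<ge> 1" using v(2) Ints_pos_ge1 by simp
  then have "d v \<ge> 1 / rat_of_int (lv V E w v)" using lvp by (simp add: field_simps)
  moreover have "1 / rat_of_int (lv V E w v) \<ge> 1 / rat_of_int L"
    using lv_le[OF v(1)] lvp by (simp add: frac_le)
  moreover have "(\<Sum>v\<in>V. d v) \<ge> d v" using v(1) dnn finV by (intro member_le_sum) auto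
  ultimately show ?thesis using sum by linarith
qed

lemma gain_gran:
  assumes b: "b \<in> V" "b \<notin> X" and XV: "X \<subseteq> V"
    and pos: "ffun V E w (insert b X) - ffun V E w X > 0"
  shows "real_of_int L * (ffun V E w (insert b X) - ffun V E w X) \<ge> 1"
proof -
  define cd where "cd = real (qfun V E X) + real (pfun V E X) - real (qfun V E (insert b X)) - real (pfun V E (insert b X))"
  define dh where "dh = hfun V E w (insert b X) - hfun V E w X"
  have Lp: "real_of_int L > 0" using L_pos by simp
  have cdnn: "cd \<ge> 0" using c_gain_nonneg[OF b XV] by (simp add: cd_def)
  have dhnn: "dh \<ge> 0" using hfun_mono[of X "insert b X"] by (auto simp: dh_def)
  have g0: "ffun V E w (insert b X) - ffun V E w X = real_of_rat dh + cd / real_of_int L"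
    unfolding gain_eq cd_def dh_def by (rule refl)
  have LL: "real_of_int L * (cd / real_of_int L) = cd" using Lp by simp
  have g: "real_of_int L * (ffun V E w (insert b X) - ffun V E w X) = real_of_int L * real_of_rat dh + cd"
    unfolding g0 distrib_left LL by (rule refl)
  have cdi: "cd = real_of_int (int (qfun V E X) + int (pfun V E X) - int (qfun V E (insert b X)) - int (pfun V E (insert b X)))"
    by (simp add: cd_def)
  show ?thesis
  proof (cases "cd \<ge> 1")
    case True
    have "real_of_int L * real_of_rat dh \<ge> 0" using Lp dhnn by (simp add: zero_le_of_rat_iff)
    then show ?thesis using g True by linarith
  next
    case False
    define z where "z = int (qfun V E X) + int (pfun V E X) - int (qfun V E (insert b X)) - int (pfun V E (insert b X))"
    have cz: "cd = real_of_int z" using cdi by (simp add: z_def)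
    have "z \<ge> 0" "z < 1" using cz cdnn False by linarith+
    then have "z = 0" by linarith
    then have "cd = 0" using cz by simp
    then have "real_of_rat dh > 0" using pos g0 by simp
    then have "dh > 0" by (simp add: zero_less_of_rat_iff)
    then have "dh \<ge> 1 / rat_of_int L" unfolding dh_def by (intro hdiff_gran) auto
    then have "real_of_rat dh \<ge> real_of_rat (1 / rat_of_int L)" by (simp add: of_rat_less_eq)
    then have "real_of_rat dh \<ge> 1 / real_of_int L" by (simp add: of_rat_divide)
    then have "real_of_int L * real_of_rat dh \<ge> 1" using Lp by (simp add: field_simps)
    then show ?thesis unfolding g using \<open>cd = 0\<close> by simp
  qed
qed

end


context G
begin

lemma gain_pos:
  assumes b: "b \<in> V" "b \<notin> X" and XV: "X \<subseteq> V"
    and h: "hfun V E w (insert b X) - hfun V E w X > 0 \<or>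
      real (qfun V E X) + real (pfun V E X) - real (qfun V E (insert b X)) - real (pfun V E (insert b X)) > 0"
  shows "ffun V E w (insert b X) - ffun V E w X > 0"
proof -
  define cd where "cd = real (qfun V E X) + real (pfun V E X) - real (qfun V E (insert b X)) - real (pfun V E (insert b X))"
  define dh where "dh = hfun V E w (insert b X) - hfun V E w X"
  have Lp: "real_of_int L > 0" using L_pos by simp
  have cdnn: "cd \<ge> 0" using c_gain_nonneg[OF b XV] by (simp add: cd_def)
  have dhnn: "dh \<ge> 0" using hfun_mono[of X "insert b X"] by (auto simp: dh_def)
  have g: "ffun V E w (insert b X) - ffun V E w X = real_of_rat dh + cd / real_of_int L"
    unfolding gain_eq cd_def dh_def by (rule refl)
  have "real_of_rat dh \<ge> 0" using dhnn by (simp add: zero_le_of_rat_iff)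
  moreover have "cd / real_of_int L \<ge> 0" using cdnn Lp by simp
  moreover have "real_of_rat dh > 0 \<or> cd / real_of_int L > 0"
    using h Lp by (auto simp: cd_def dh_def zero_less_of_rat_iff)
  ultimately show ?thesis using g by linarith
qed

lemma reach_sub: "greedy_reach f V S \<Longrightarrow> S \<subseteq> V"
  by (induction rule: greedy_reach.induct) auto

lemma hfun_single: assumes b: "b \<in> V" shows "hfun V E w {b} \<le> 3/2 * W b"
proof -
  have le: "hA V E w {b} v \<le> (if v = b then W b / 2 else 0) + WA V E w {b} v" for v
    using WA_nonneg[of "{b}" v] by (auto simp: hA_alt)
  have s1: "(\<Sum>v\<in>V. WA V E w {b} v) = W b"
  proof -
    have "(\<Sum>v\<in>V. WA V E w {b} v) = (\<Sum>v\<in>V. if v \<in> N b then w b v else 0)"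
    proof (intro sum.cong refl)
      fix v assume "v \<in> V"
      have "N v \<inter> {b} = (if E v b then {b} else {})" using EV by (auto simp: nbrs_def)
      then show "WA V E w {b} v = (if v \<in> N b then w b v else 0)"
        using N_iff Esym wsym by (auto simp: WA_def)
    qed
    also have "\<dots> = (\<Sum>v\<in>V \<inter> N b. w b v)" using finV by (simp add: sum.inter_restrict)
    also have "V \<inter> N b = N b" using N_sub by blast
    finally show ?thesis by (simp add: WA_def Int_absorb2[OF N_sub])
  qed
  have "hfun V E w {b} \<le> (\<Sum>v\<in>V. (if v = b then W b / 2 else 0) + WA V E w {b} v)"
    unfolding hfun_def by (intro sum_mono le)
  also have "\<dots> = W b / 2 + W b" using b finV by (simp add: sum.distrib s1)
  finally show ?thesis by simp
qed

lemma W_le_Wmax: "v \<in> V \<Longrightarrow> W v \<le> Wmax V E w"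
  unfolding Wmax_def using finV by (intro Max_ge) auto

lemma deg_le: "v \<in> V \<Longrightarrow> card (N v) \<le> max_degree V E"
  unfolding max_degree_def using finV by (intro Max_ge) auto

lemma q_single: assumes b: "b \<in> V" shows "qfun V E {b} + card (N b) \<ge> card V"
proof -
  let ?k = "kq {b}"
  have iso: "?k x = {x}" if "x \<in> V - N b" "x \<noteq> b" for x
  proof -
    have "\<forall>y\<in>V. \<not> Rq {b} x y" using that N_iff Esym by auto
    then show ?thesis using cls_isolated[of x V "Rq {b}"] that by blast
  qed
  have inj: "inj_on ?k (V - N b)"
  proof
    fix x y assume xy: "x \<in> V - N b" "y \<in> V - N b" "?k x = ?k y"
    show "x = y"
    proof (cases "x = b")
      case True
      show ?thesis
      proof (rule ccontr)
        assume "x \<noteq> y"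
        then have "?k y = {y}" using iso xy True by auto
        then show False using xy cls_self[of x V] \<open>x \<noteq> y\<close> by auto
      qed
    next
      case False
      then have "?k x = {x}" using iso xy by auto
      moreover have "y \<in> ?k y" using xy cls_self[of y V] by blast
      ultimately show ?thesis using xy(3) by (metis singletonD)
    qed
  qed
  have "card (V - N b) = card (?k ` (V - N b))" using card_image[OF inj] by simp
  also have "\<dots> \<le> card (?k ` V)" using finV by (intro card_mono) auto
  finally have "card (V - N b) \<le> qfun V E {b}" by (simp add: qfun_def num_comps_img)
  moreover have "card V \<le> card (V - N b) + card (N b)"
  proof -
    have "card V \<le> card ((V - N b) \<union> N b)" using finV finN by (intro card_mono) auto
    then show ?thesis using card_Un_le[of "V - N b" "N b"] by linarith
  qed
  ultimately show ?thesis by linarith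
qed

lemma single_gain:
  assumes b: "b \<in> V"
  shows "real_of_int L * (ffun V E w (insert b {}) - ffun V E w {})
     \<le> 3/2 * real_of_int L * real_of_rat (Wmax V E w) + real (max_degree V E) - 1"
proof -
  have Lp: "real_of_int L > 0" using L_pos by simp
  define dh where "dh = hfun V E w {b} - hfun V E w {}"
  have h0: "hfun V E w {} \<ge> 0" unfolding hfun_def by (intro sum_nonneg hA_nonneg)
  have "dh \<le> 3/2 * Wmax V E w" using hfun_single[OF b] W_le_Wmax[OF b] h0 by (simp add: dh_def)
  then have "real_of_rat dh \<le> real_of_rat (3/2 * Wmax V E w)" by (simp only: of_rat_less_eq)
  moreover have "real_of_rat (3/2 * Wmax V E w) = 3/2 * real_of_rat (Wmax V E w)"
    by (simp add: of_rat_mult of_rat_divide)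
  ultimately have dhr: "real_of_rat dh \<le> 3/2 * real_of_rat (Wmax V E w)" by simp
  have p0: "pfun V E {} = 0" by (simp add: pfun_def num_comps_img)
  have p1: "pfun V E {b} = 1" by (simp add: pfun_def num_comps_img)
  have q0: "qfun V E {} \<le> card V" unfolding qfun_def num_comps_img by (rule card_image_le[OF finV])
  have q1: "qfun V E {b} + card (N b) \<ge> card V" by (rule q_single[OF b])
  have cd: "real (qfun V E {}) + real (pfun V E {}) - real (qfun V E {b}) - real (pfun V E {b})
      \<le> real (max_degree V E) - 1"
    using p0 p1 q0 q1 deg_le[OF b] by linarith
  have "real_of_int L * (ffun V E w (insert b {}) - ffun V E w {})
      = real_of_int L * real_of_rat dh + (real (qfun V E {}) + real (pfun V E {}) - real (qfun V E {b}) - real (pfun V E {b}))"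
  proof -
    have LL: "real_of_int L * ((real (qfun V E {}) + real (pfun V E {}) - real (qfun V E {b}) - real (pfun V E {b})) / real_of_int L)
       = real (qfun V E {}) + real (pfun V E {}) - real (qfun V E {b}) - real (pfun V E {b})" using Lp by simp
    show ?thesis unfolding gain_eq dh_def distrib_left LL by simp
  qed
  also have "\<dots> \<le> real_of_int L * (3/2 * real_of_rat (Wmax V E w)) + (real (max_degree V E) - 1)"
    using dhr Lp cd by (intro add_mono mult_left_mono) auto
  finally show ?thesis by (simp add: algebra_simps)
qed

end


context G
begin

lemma output_props:
  assumes out: "greedy_output (ffun V E w) V S"
    and BV: "B \<subseteq> V" and domB: "dom_set B" and conB: "num_comps B E = 1"
  shows "dom_set S \<and> qfun V E S = 1 \<and> pfun V E S = 1"
proof -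
  have SV: "S \<subseteq> V" using out reach_sub by (auto simp: greedy_output_def)
  have finS: "finite S" using SV finV finite_subset by blast
  have nog: "\<not> ffun V E w (insert u S) - ffun V E w S > 0" if "u \<in> V" "u \<notin> S" for u
    using out that by (auto simp: greedy_output_def)
  have Vne: "V \<noteq> {}" using cardV by auto
  have domS: "dom_set S"
    unfolding dom_set_def
  proof (rule ccontr)
    assume "\<not> (\<forall>v\<in>V - S. W v / 2 \<le> WA V E w S v)"
    then obtain v where v: "v \<in> V" "v \<notin> S" "WA V E w S v < W v / 2" by auto
    define d where "d x = hA V E w (insert v S) x - hA V E w S x" for x
    have dnn: "\<forall>x\<in>V. d x \<ge> 0" using hA_mono[of S "insert v S"] by (auto simp: d_def)
    have "d v > 0" using v by (simp add: d_def hA_def)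
    then have "(\<Sum>x\<in>V. d x) > 0" using dnn v(1) finV by (intro sum_pos2) auto
    then have "hfun V E w (insert v S) - hfun V E w S > 0"
      by (simp add: hfun_def d_def sum_subtractf)
    then have "ffun V E w (insert v S) - ffun V E w S > 0" using gain_pos[OF v(1,2) SV] by blast
    then show False using nog v by blast
  qed
  have Sne: "S \<noteq> {}"
  proof
    assume "S = {}"
    obtain v where v: "v \<in> V" using Vne by blast
    have "WA V E w S v = 0" using \<open>S = {}\<close> by (simp add: WA_def)
    then show False using domS v W_pos[OF v] \<open>S = {}\<close> by (auto simp: dom_set_def)
  qed
  have q1: "qfun V E S = 1"
  proof (rule ccontr)
    assume ne: "qfun V E S \<noteq> 1"
    have "qfun V E S \<ge> 1" using Vne finV by (simp add: qfun_def num_comps_img Suc_leI card_gt_0_iff)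
    then have "qfun V E S \<ge> 2" using ne by simp
    then have "(\<Sum>b\<in>B - S. int (dq S b) - 1) \<ge> 1" using K1[OF SV BV domB conB] by linarith
    then have "\<exists>b\<in>B - S. int (dq S b) - 1 > 0"
    proof (rule contrapos_pp)
      assume "\<not> (\<exists>b\<in>B - S. int (dq S b) - 1 > 0)"
      then have "\<forall>b\<in>B - S. int (dq S b) - 1 \<le> 0" by (simp add: not_less)
      then have "(\<Sum>b\<in>B - S. int (dq S b) - 1) \<le> 0" by (intro sum_nonpos) blast
      then show "\<not> (\<Sum>b\<in>B - S. int (dq S b) - 1) \<ge> 1" by linarith
    qed
    then obtain b where b: "b \<in> B - S" "int (dq S b) - 1 > 0" by blast
    have bV: "b \<in> V" using b BV by blast
    obtain s where s: "s \<in> S" "E b s" using dom_nbr[OF domS bV] b by blast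
    have "s \<in> N b \<inter> S" using s N_iff by auto
    then have "kp S s \<in> kp S ` (N b \<inter> S)" by blast
    moreover have "finite (kp S ` (N b \<inter> S))" using finN by blast
    ultimately have "card (kp S ` (N b \<inter> S)) > 0" by (subst card_gt_0_iff) blast
    then have m1: "mq S b \<ge> 1" by simp
    have d2: "dq S b \<ge> 2" using b(2) by linarith
    have "real (qfun V E S) + real (pfun V E S) - real (qfun V E (insert b S)) - real (pfun V E (insert b S))
        \<ge> real (dq S b) + real (mq S b) - 2" using c_gain[OF bV _ SV] b(1) by blast
    moreover have "real (dq S b) \<ge> 2" "real (mq S b) \<ge> 1" using d2 m1 by simp_all
    ultimately have "real (qfun V E S) + real (pfun V E S) - real (qfun V E (insert b S)) - real (pfun V E (insert b S)) > 0"
      by linarith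
    then have "ffun V E w (insert b S) - ffun V E w S > 0" using gain_pos[OF bV _ SV] b by blast
    then show False using nog bV b by blast
  qed
  have p1: "pfun V E S = 1"
  proof (rule ccontr)
    assume ne: "pfun V E S \<noteq> 1"
    have "pfun V E S \<ge> 1" using Sne finS by (simp add: pfun_def num_comps_img Suc_leI card_gt_0_iff)
    then have ge2: "card (kp S ` S) \<ge> 2" using ne by (simp add: pfun_def num_comps_img)
    obtain x y where xy: "x \<in> S" "y \<in> S" "kp S x \<noteq> kp S y"
    proof (rule ccontr)
      assume "\<not> thesis"
      then have "\<forall>x\<in>S. \<forall>y\<in>S. kp S x = kp S y" using that by blast
      then obtain x where "x \<in> S" "kp S ` S \<subseteq> {kp S x}" using Sne by blast
      then have "card (kp S ` S) \<le> 1" using card_mono[of "{kp S x}"] by fastforce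
      then show False using ge2 by simp
    qed
    let ?C = "kp S x"
    have Cclosed: "kp S c = ?C" if "c \<in> ?C" for c
    proof -
      have "c \<in> S" "(x, c) \<in> (crel S E)\<^sup>*" using that unfolding cls_def by simp_all
      then have "kp S x = kp S c" using cls_eq_iff[OF Esym', of x S c] xy(1) by blast
      then show ?thesis by simp
    qed
    define Y where "Y = ?C \<union> {a \<in> V - S. \<exists>c\<in>?C. E a c}"
    have nc: "num_comps V (Rq S) = 1" using q1 by (simp add: qfun_def)
    have xyV: "x \<in> V" "y \<in> V" using xy SV by auto
    have path: "(x, y) \<in> (crel V (Rq S))\<^sup>*" by (rule connected_path[OF nc xyV])
    have xY: "x \<in> Y" using cls_self[OF xy(1)] by (simp add: Y_def)
    have yC: "y \<notin> ?C"
    proof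
      assume "y \<in> ?C"
      then have "kp S y = ?C" by (rule Cclosed)
      then show False using xy(3) by simp
    qed
    have yY: "y \<notin> Y" using yC xy(2) by (simp add: Y_def)
    obtain a b where ab: "(a, b) \<in> crel V (Rq S)" "a \<in> Y" "b \<notin> Y"
      using exit_edge[OF path xY yY] by blast
    have ab2: "a \<in> V" "b \<in> V" "E a b" "a \<in> S \<or> b \<in> S" using ab(1) by (auto simp: crel_def)
    show False
    proof (cases "a \<in> ?C")
      case True
      then have aS: "a \<in> S" by (simp add: cls_def)
      show False
      proof (cases "b \<in> S")
        case True
        have "kp S a = kp S b" using cls_edge[OF Esym', where X=S and x=a and y=b] aS True ab2 by auto
        then have "b \<in> ?C" using Cclosed[of a] \<open>a \<in> ?C\<close> cls_self[OF True] by auto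
        then show False using ab(3) by (simp add: Y_def)
      next
        case False
        then have "b \<in> Y" using ab2 \<open>a \<in> ?C\<close> Esym by (auto simp: Y_def)
        then show False using ab(3) by simp
      qed
    next
      case False
      then obtain c where c: "a \<notin> S" "c \<in> ?C" "E a c" using ab(2) by (auto simp: Y_def)
      have bS: "b \<in> S" using ab2 c by blast
      have bC: "b \<notin> ?C" using ab(3) by (simp add: Y_def)
      have cS: "c \<in> S" using c by (simp add: cls_def)
      have ne2: "kp S b \<noteq> kp S c" using Cclosed[OF c(2)] cls_self[OF bS] bC by auto
      have "{kp S b, kp S c} \<subseteq> kp S ` (N a \<inter> S)" using bS cS c ab2 N_iff by auto
      then have "card {kp S b, kp S c} \<le> mq S a" using finN by (intro card_mono) auto
      then have m2: "mq S a \<ge> 2" using ne2 by simp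
      have "real (qfun V E S) + real (pfun V E S) - real (qfun V E (insert a S)) - real (pfun V E (insert a S)) > 0"
        using c_gain[OF ab2(1) c(1) SV] dq_pos[of S a] m2 by linarith
      then have "ffun V E w (insert a S) - ffun V E w S > 0" using gain_pos[OF ab2(1) c(1) SV] by blast
      then show False using nog ab2(1) c(1) by blast
    qed
  qed
  show ?thesis using domS q1 p1 by blast
qed

lemma output_WPPICDS:
  assumes out: "greedy_output (ffun V E w) V S"
    and BV: "B \<subseteq> V" and domB: "dom_set B" and conB: "num_comps B E = 1"
  shows "is_WPPICDS V E w S" "ffun V E w S = fmax"
proof -
  have SV: "S \<subseteq> V" using out reach_sub by (auto simp: greedy_output_def)
  have P: "dom_set S \<and> qfun V E S = 1 \<and> pfun V E S = 1" by (rule output_props[OF assms])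
  show "is_WPPICDS V E w S" using SV P by (auto simp: is_WPPICDS_def dom_set_def pfun_def)
  have "hfun V E w S = hmax" unfolding hfun_def hmax_def
    using P by (intro sum.cong refl) (auto simp: hA_def dom_set_def)
  then show "ffun V E w S = fmax" using P by (simp add: ffun_def cfun_def fmax_def)
qed

end


lemma pow_exp_bound:
  fixes kk :: real
  assumes "kk \<ge> 1"
  shows "(1 - 1 / kk) ^ n \<le> exp (- real n / kk)"
proof -
  have q0: "0 \<le> 1 - 1 / kk" using assms by (simp add: field_simps)
  have "1 - 1 / kk \<le> exp (- (1 / kk))" using exp_ge_add_one_self[of "- (1 / kk)"] by simp
  then have "(1 - 1 / kk) ^ n \<le> exp (- (1 / kk)) ^ n" using q0 by (intro power_mono) auto
  also have "\<dots> = exp (real n * (- (1 / kk)))" by (rule exp_of_nat_mult[symmetric])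
  also have "real n * (- (1 / kk)) = - real n / kk" by simp
  finally show ?thesis .
qed

lemma n_bound:
  fixes kk A :: real
  assumes "kk \<ge> 1" "A > 0" "kk < kk * A * (1 - 1 / kk) ^ n"
  shows "real n < kk * ln A"
proof -
  have "kk < kk * A * exp (- real n / kk)"
    using assms pow_exp_bound[OF assms(1), of n]
    by (smt (verit) mult_left_mono mult_pos_pos)
  then have "1 < A * exp (- real n / kk)" using assms(1) by (simp add: mult.assoc)
  then have "exp (real n / kk) < A * exp (- real n / kk) * exp (real n / kk)" by simp
  also have "\<dots> = A" by (simp add: mult.assoc exp_minus_inverse exp_minus field_simps)
  finally have "exp (real n / kk) < A" .
  then have "real n / kk < ln A" using assms(2) by (metis exp_less_cancel_iff exp_ln)
  then show ?thesis using assms(1) by (simp add: field_simps)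
qed

context G
begin

definition Phi :: "'a set \<Rightarrow> real" where
  "Phi X = real_of_int L * (fmax - ffun V E w X)"

definition Aarg :: real where
  "Aarg = 3/2 * real_of_int L * real_of_rat (Wmax V E w) + real (max_degree V E)"

lemma Aarg_ge1: "Aarg \<ge> 1"
proof -
  have "V \<noteq> {}" using cardV by auto
  then obtain v where v: "v \<in> V" by blast
  have "W v \<le> Wmax V E w" by (rule W_le_Wmax[OF v])
  then have "Wmax V E w \<ge> 0" using W_pos[OF v] by simp
  then have w0: "real_of_rat (Wmax V E w) \<ge> 0" by (simp add: zero_le_of_rat_iff)
  obtain u where "E v u" using nbr_exists[OF v] by blast
  then have "u \<in> N v" using N_iff by simp
  then have "card (N v) > 0" using finN[of v] by (auto simp: card_gt_0_iff)
  then have "card (N v) \<ge> 1" by simp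
  then have "max_degree V E \<ge> 1" using deg_le[OF v] by simp
  moreover have "real_of_int L \<ge> 1" using L_pos by simp
  ultimately have "real (max_degree V E) \<ge> 1" "3/2 * real_of_int L * real_of_rat (Wmax V E w) \<ge> 0"
    using w0 by simp_all
  then show ?thesis unfolding Aarg_def by linarith
qed

lemma psi_step:
  assumes Bw: "is_WPPICDS V E w B" and XV: "X \<subseteq> V"
    and u: "u \<in> V" "u \<notin> X"
    and mx: "\<forall>u'\<in>V - X. ffun V E w (insert u' X) - ffun V E w X \<le> ffun V E w (insert u X) - ffun V E w X"
    and pos: "ffun V E w (insert u X) - ffun V E w X > 0"
  shows "Phi X - (real (card B) - 1) \<le> real (card B) * (real_of_int L * (ffun V E w (insert u X) - ffun V E w X))"
proof -
  let ?g = "ffun V E w (insert u X) - ffun V E w X"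
  have BV: "B \<subseteq> V" and domB: "dom_set B" and conB: "num_comps B E = 1"
    using Bw by (auto simp: is_WPPICDS_def dom_set_def)
  have finB: "finite B" using BV finV finite_subset by blast
  have Lp: "real_of_int L > 0" using L_pos by simp
  have k: "fmax - ffun V E w X - (real (card B) - 1) / real_of_int L
     \<le> (\<Sum>b\<in>B - X. ffun V E w (insert b X) - ffun V E w X)" by (rule key[OF XV BV domB conB])
  have "(\<Sum>b\<in>B - X. ffun V E w (insert b X) - ffun V E w X) \<le> (\<Sum>b\<in>B - X. ?g)"
    using mx BV by (intro sum_mono) auto
  also have "\<dots> = real (card (B - X)) * ?g" by simp
  also have "\<dots> \<le> real (card B) * ?g"
    using pos finB by (intro mult_right_mono) (auto simp: card_mono)
  finally have "fmax - ffun V E w X - (real (card B) - 1) / real_of_int L \<le> real (card B) * ?g"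
    using k by linarith
  then have "real_of_int L * (fmax - ffun V E w X - (real (card B) - 1) / real_of_int L)
      \<le> real_of_int L * (real (card B) * ?g)" using Lp by (intro mult_left_mono) auto
  moreover have "real_of_int L * (fmax - ffun V E w X - (real (card B) - 1) / real_of_int L)
      = Phi X - (real (card B) - 1)"
  proof -
    have LL: "real_of_int L * ((real (card B) - 1) / real_of_int L) = real (card B) - 1" using Lp by simp
    show ?thesis unfolding Phi_def by (simp only: right_diff_distrib LL)
  qed
  ultimately show ?thesis by (simp add: mult.left_commute)
qed

definition Inv :: "'a set \<Rightarrow> 'a set \<Rightarrow> bool" where
  "Inv B X \<longleftrightarrow> X \<subseteq> V \<and>
     (if Phi X - (real (card B) - 1) > real (card B)
      then Phi X - (real (card B) - 1) \<le> real (card B) * Aarg * (1 - 1 / real (card B)) ^ card X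
      else real (card X) + Phi X \<le> real (card B) * ln Aarg + 2 * real (card B))"

lemma greedy_inv:
  assumes Bw: "is_WPPICDS V E w B" and r: "greedy_reach (ffun V E w) V S"
  shows "Inv B S"
  using r
proof (induction rule: greedy_reach.induct)
  case start
  have BV: "B \<subseteq> V" and domB: "dom_set B" and conB: "num_comps B E = 1"
    using Bw by (auto simp: is_WPPICDS_def dom_set_def)
  have finB: "finite B" using BV finV finite_subset by blast
  have Bne: "B \<noteq> {}" using conB by (auto simp: num_comps_img)
  let ?k = "real (card B)"
  have k1: "?k \<ge> 1" using Bne finB by (simp add: Suc_leI card_gt_0_iff)
  have Lp: "real_of_int L > 0" using L_pos by simp
  have A1: "Aarg \<ge> 1" by (rule Aarg_ge1)
  have k: "fmax - ffun V E w {} - (?k - 1) / real_of_int L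
     \<le> (\<Sum>b\<in>B - {}. ffun V E w (insert b {}) - ffun V E w {})" by (rule key[OF _ BV domB conB]) simp
  then have "real_of_int L * (fmax - ffun V E w {} - (?k - 1) / real_of_int L)
      \<le> real_of_int L * (\<Sum>b\<in>B. ffun V E w (insert b {}) - ffun V E w {})" using Lp by simp
  moreover have "real_of_int L * (fmax - ffun V E w {} - (?k - 1) / real_of_int L) = Phi {} - (?k - 1)"
  proof -
    have LL: "real_of_int L * ((?k - 1) / real_of_int L) = ?k - 1" using Lp by simp
    show ?thesis unfolding Phi_def by (simp only: right_diff_distrib LL)
  qed
  moreover have "real_of_int L * (\<Sum>b\<in>B. ffun V E w (insert b {}) - ffun V E w {})
      = (\<Sum>b\<in>B. real_of_int L * (ffun V E w (insert b {}) - ffun V E w {}))"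
    by (simp add: sum_distrib_left)
  moreover have "(\<Sum>b\<in>B. real_of_int L * (ffun V E w (insert b {}) - ffun V E w {})) \<le> (\<Sum>b\<in>B. Aarg - 1)"
    using single_gain BV unfolding Aarg_def by (intro sum_mono) auto
  ultimately have psi0: "Phi {} - (?k - 1) \<le> ?k * (Aarg - 1)" by simp
  have "ln Aarg \<ge> 0" using A1 by simp
  then have "?k * ln Aarg \<ge> 0" using k1 by simp
  then have kl: "?k * ln Aarg \<ge> 0" .
  have b1: "Phi {} - (?k - 1) \<le> ?k * Aarg * (1 - 1 / ?k) ^ card ({}::'a set)"
    using psi0 k1 by (simp add: algebra_simps)
  have b2: "\<not> Phi {} - (?k - 1) > ?k \<Longrightarrow> real (card ({}::'a set)) + Phi {} \<le> ?k * ln Aarg + 2 * ?k"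
    using kl by simp
  show ?case unfolding Inv_def using b1 b2 by simp
next
  case (step S u)
  let ?f = "ffun V E w"
  have BV: "B \<subseteq> V" and domB: "dom_set B" and conB: "num_comps B E = 1"
    using Bw by (auto simp: is_WPPICDS_def dom_set_def)
  have finB: "finite B" using BV finV finite_subset by blast
  have Bne: "B \<noteq> {}" using conB by (auto simp: num_comps_img)
  let ?k = "real (card B)"
  have k1: "?k \<ge> 1" using Bne finB by (simp add: Suc_leI card_gt_0_iff)
  have Lp: "real_of_int L > 0" using L_pos by simp
  have A1: "Aarg \<ge> 1" by (rule Aarg_ge1)
  have SV: "S \<subseteq> V" using step.IH by (simp add: Inv_def)
  have finS: "finite S" using SV finV finite_subset by blast
  have uV: "u \<in> V" "u \<notin> S" using step.hyps by auto
  have ins: "S \<union> {u} = insert u S" by auto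
  have pos: "?f (insert u S) - ?f S > 0" using step.hyps(3) ins by simp
  have mx: "\<forall>u'\<in>V - S. ?f (insert u' S) - ?f S \<le> ?f (insert u S) - ?f S"
    using step.hyps(4) by (simp add: ins)
  define d where "d = real_of_int L * (?f (insert u S) - ?f S)"
  have d1: "d \<ge> 1" unfolding d_def by (rule gain_gran[OF uV SV pos])
  have ps: "Phi S - (?k - 1) \<le> ?k * d" unfolding d_def by (rule psi_step[OF Bw SV uV mx pos])
  have phi': "Phi (insert u S) = Phi S - d"
    unfolding Phi_def d_def by (simp add: right_diff_distrib)
  have cS: "card (insert u S) = card S + 1" using finS uV by simp
  have IH: "if Phi S - (?k - 1) > ?k
      then Phi S - (?k - 1) \<le> ?k * Aarg * (1 - 1 / ?k) ^ card S
      else real (card S) + Phi S \<le> ?k * ln Aarg + 2 * ?k"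
    using step.IH by (simp add: Inv_def)
  have goal: "if Phi (insert u S) - (?k - 1) > ?k
      then Phi (insert u S) - (?k - 1) \<le> ?k * Aarg * (1 - 1 / ?k) ^ card (insert u S)
      else real (card (insert u S)) + Phi (insert u S) \<le> ?k * ln Aarg + 2 * ?k"
  proof (cases "Phi S - (?k - 1) > ?k")
    case True
    then have P1: "Phi S - (?k - 1) \<le> ?k * Aarg * (1 - 1 / ?k) ^ card S" using IH by simp
    let ?q = "1 - 1 / ?k"
    have q0: "?q \<ge> 0" using k1 by (simp add: field_simps)
    show ?thesis
    proof (cases "Phi (insert u S) - (?k - 1) > ?k")
      case True
      have "d \<ge> (Phi S - (?k - 1)) / ?k" using ps k1 by (simp add: field_simps)
      then have "Phi (insert u S) - (?k - 1) \<le> (Phi S - (?k - 1)) - (Phi S - (?k - 1)) / ?k"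
        using phi' by linarith
      also have "\<dots> = (Phi S - (?k - 1)) * ?q" using k1 by (simp add: field_simps)
      also have "\<dots> \<le> (?k * Aarg * ?q ^ card S) * ?q" using P1 q0 by (intro mult_right_mono) auto
      also have "\<dots> = ?k * Aarg * ?q ^ card (insert u S)" using cS by simp
      finally show ?thesis using True by simp
    next
      case False
      have "?k < ?k * Aarg * ?q ^ card S" using True P1 by linarith
      then have nb: "real (card S) < ?k * ln Aarg" using n_bound[OF k1] A1 by simp
      have "real (card (insert u S)) + Phi (insert u S) = real (card S) + 1 + (Phi (insert u S) - (?k - 1)) + (?k - 1)"
        using cS by simp
      also have "\<dots> \<le> real (card S) + 1 + ?k + (?k - 1)" using False by simp
      finally show ?thesis using False nb by simp
    qed
  next
    case False
    then have P2: "real (card S) + Phi S \<le> ?k * ln Aarg + 2 * ?k" using IH by simp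
    have "Phi (insert u S) - (?k - 1) \<le> ?k" using False phi' d1 by linarith
    moreover have "real (card (insert u S)) + Phi (insert u S) \<le> ?k * ln Aarg + 2 * ?k"
      using P2 phi' d1 cS by simp
    ultimately show ?thesis by simp
  qed
  show ?case using goal SV uV ins unfolding Inv_def by simp
qed

lemma final_bound:
  assumes Bw: "is_WPPICDS V E w B" and out: "greedy_output (ffun V E w) V S"
  shows "is_WPPICDS V E w S \<and> real (card S) \<le> (2 + ln Aarg) * real (card B)"
proof -
  have BV: "B \<subseteq> V" and domB: "dom_set B" and conB: "num_comps B E = 1"
    using Bw by (auto simp: is_WPPICDS_def dom_set_def)
  have finB: "finite B" using BV finV finite_subset by blast
  have Bne: "B \<noteq> {}" using conB by (auto simp: num_comps_img)
  have k1: "real (card B) \<ge> 1" using Bne finB by (simp add: Suc_leI card_gt_0_iff)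
  have W: "is_WPPICDS V E w S" "ffun V E w S = fmax" using output_WPPICDS[OF out BV domB conB] by auto
  have ph: "Phi S = 0" using W(2) by (simp add: Phi_def)
  have "Inv B S" using greedy_inv[OF Bw] out by (simp add: greedy_output_def)
  then have "real (card S) + Phi S \<le> real (card B) * ln Aarg + 2 * real (card B)"
    using ph k1 unfolding Inv_def by (auto split: if_splits)
  then show ?thesis using W(1) ph by (simp add: algebra_simps)
qed

end

theorem mainTheorem20:
  fixes V :: "'a set" and E :: "'a \<Rightarrow> 'a \<Rightarrow> bool" and w :: "'a \<Rightarrow> 'a \<Rightarrow> rat"
    and S Sstar :: "'a set"
  assumes "simple_graph V E"
    and "card V \<ge> 2"
    and "num_comps V E = 1"
    and "\<forall>u v. E u v \<longrightarrow> w u v > 0"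
    and "\<forall>u v. w u v = w v u"
    and "greedy_output (ffun V E w) V S"
    and "is_WPPICDS V E w Sstar"
    and "\<forall>T. is_WPPICDS V E w T \<longrightarrow> card Sstar \<le> card T"
  shows "is_WPPICDS V E w S \<and>
    real (card S) \<le> (2 + ln (3/2 * real_of_int (Lmax V E w) * real_of_rat (Wmax V E w)
                          + real (max_degree V E))) * real (card Sstar)"
proof -
  interpret G V E w using assms(1-5) by unfold_locales auto
  show ?thesis using final_bound[OF assms(7,6)] unfolding Aarg_def .
qed


end
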